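(* Let $n\ge 1$, $X=\{1,\dots,n\}$, and identify the algebra $\mathcal{A}$ of functions $X\to\mathbb{R}$ (pointwise operations) with $\mathbb{R}^n$ with componentwise multiplication; let $e_1,\dots,e_n$ be the standard basis. Let $\sigma:X\to X$ be a bijection and $\tilde{\sigma}(f)=f\circ\sigma^{-1}$ the induced automorphism. Let $\Delta:\mathbb{R}^n\to\mathbb{R}^n$ be a linear operator whose standard matrix $[k_{li}]$ (with $k_{li}$ the $l$-th component of $\Delta(e_i)$) satisfies: (1) $k_{li}=0$ whenever $l\notin\{i,\sigma(i)\}$; (2) for every $i\in X$, writing $j=\sigma(i)$, $k_{ji}=-k_{jj}$. Then $\Delta$ is a $\tilde{\sigma}$-derivation, i.e. $\Delta(fg)=\tilde{\sigma}(f)\Delta(g)+\Delta(f)g$ for all $f,g\in\mathbb{R}^n$.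
   Context: Note $\tilde{\sigma}(e_i)=e_{\sigma(i)}$. *)

theory Defs
  imports "HOL-Analysis.Analysis"
begin

text \<open>The algebra of functions X \<rightarrow> R, X finite, is real ^ 'n with componentwise
  multiplication (times_vec).\<close>

definition sigma_tilde :: "('n::finite \<Rightarrow> 'n) \<Rightarrow> real ^ 'n \<Rightarrow> real ^ 'n" where
  "sigma_tilde \<sigma> f = (\<chi> l. f $ (inv \<sigma> l))"

definition sigma_derivation :: "('n::finite \<Rightarrow> 'n) \<Rightarrow> (real ^ 'n \<Rightarrow> real ^ 'n) \<Rightarrow> bool" where
  "sigma_derivation \<sigma> D \<longleftrightarrow>
     (\<forall>f g. D (f * g) = sigma_tilde \<sigma> f * D g + D f * g)"

end

theory Submission
  imports Defs
begin

lemma delta_formula: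
  fixes \<sigma> :: "'n::finite \<Rightarrow> 'n" and \<Delta> :: "real ^ 'n \<Rightarrow> real ^ 'n"
  assumes b: "bij \<sigma>"
    and lin: "linear \<Delta>"
    and z: "\<And>l i. l \<notin> {i, \<sigma> i} \<Longrightarrow> \<Delta> (axis i 1) $ l = 0"
    and k: "\<And>i. \<Delta> (axis i 1) $ (\<sigma> i) = - (\<Delta> (axis (\<sigma> i) 1) $ (\<sigma> i))"
  shows "\<Delta> f $ l = \<Delta> (axis l 1) $ l * (f $ l - f $ (inv \<sigma> l))"
proof -
  define p where "p = inv \<sigma> l"
  have sp: "\<sigma> p = l" using b unfolding p_def by (simp add: bij_is_surj surj_f_inv_f)
  have fe: "f = (\<Sum>i\<in>UNIV. f $ i *\<^sub>R axis i 1)"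
    using basis_expansion[of f] by (simp add: scalar_mult_eq_scaleR)
  have "\<Delta> f = (\<Sum>i\<in>UNIV. f $ i *\<^sub>R \<Delta> (axis i 1))"
    by (subst fe) (simp add: linear_sum[OF lin] linear_scale[OF lin])
  hence D: "\<Delta> f $ l = (\<Sum>i\<in>UNIV. f $ i * \<Delta> (axis i 1) $ l)"
    by (simp add: sum_component)
  have inj: "\<And>i. \<sigma> i = l \<Longrightarrow> i = p" using b unfolding p_def
    by (metis bij_inv_eq_iff)
  show ?thesis
  proof (cases "p = l")
    case True
    have zz: "\<And>i. i \<noteq> l \<Longrightarrow> \<Delta> (axis i 1) $ l = 0"
      by (metis True inj z insertE singletonD)
    have a0: "\<Delta> (axis l 1) $ l = 0" using k[of l] sp True by simp
    have "\<Delta> f $ l = (\<Sum>i\<in>{l}. f $ i * \<Delta> (axis i 1) $ l)"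
      unfolding D
      apply (rule sum.mono_neutral_right)
      using zz by auto
    then show ?thesis using a0 by simp
  next
    case False
    have "\<Delta> f $ l = (\<Sum>i\<in>{l,p}. f $ i * \<Delta> (axis i 1) $ l)"
      unfolding D
      apply (rule sum.mono_neutral_right)
      using z inj by (auto, metis)
    also have "\<dots> = f $ l * \<Delta> (axis l 1) $ l + f $ p * \<Delta> (axis p 1) $ l"
      using False by simp
    also have "\<Delta> (axis p 1) $ l = - \<Delta> (axis l 1) $ l" using k[of p] sp by simp
    finally show ?thesis unfolding p_def by (simp add: algebra_simps)
  qed
qed

theorem theorem2:
  fixes \<sigma> :: "'n::finite \<Rightarrow> 'n" and \<Delta> :: "real ^ 'n \<Rightarrow> real ^ 'n"
  assumes "bij \<sigma>"
    and "linear \<Delta>"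
    and "\<And>l i. l \<notin> {i, \<sigma> i} \<Longrightarrow> \<Delta> (axis i 1) $ l = 0"
    and "\<And>i. \<Delta> (axis i 1) $ (\<sigma> i) = - (\<Delta> (axis (\<sigma> i) 1) $ (\<sigma> i))"
  shows "sigma_derivation \<sigma> \<Delta>"
  unfolding sigma_derivation_def
proof (intro allI)
  fix f g :: "real ^ 'n"
  note F = delta_formula[OF assms]
  show "\<Delta> (f * g) = sigma_tilde \<sigma> f * \<Delta> g + \<Delta> f * g"
  proof (rule vec_eq_iff[THEN iffD2], intro allI)
    fix l
    have "\<Delta> (f * g) $ l = \<Delta> (axis l 1) $ l * ((f*g) $ l - (f*g) $ (inv \<sigma> l))" by (rule F)
    moreover have "\<Delta> f $ l = \<Delta> (axis l 1) $ l * (f $ l - f $ (inv \<sigma> l))" by (rule F)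
    moreover have "\<Delta> g $ l = \<Delta> (axis l 1) $ l * (g $ l - g $ (inv \<sigma> l))" by (rule F)
    moreover have key: "\<And>a A B C x y x' y' :: real. A = a*(x*y - x'*y') \<Longrightarrow> B = a*(x-x') \<Longrightarrow> C = a*(y-y') \<Longrightarrow> A = x' * C + B * y"
    proof -
      fix a A B C x y x' y' :: real
      assume "A = a*(x*y - x'*y')" "B = a*(x-x')" "C = a*(y-y')"
      then show "A = x' * C + B * y" by (simp only:) (simp add: algebra_simps)
    qed
    ultimately show "\<Delta> (f * g) $ l = (sigma_tilde \<sigma> f * \<Delta> g + \<Delta> f * g) $ l"
      unfolding sigma_tilde_def by simp
  qed
qed

end
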